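(* Let $\Omega\subset\mathbb{R}^n$, let $k$ be a kernel on $\Omega$ satisfying the standing assumptions in the context, and let $u\in H_k(\Omega)$. Apply the gradient Hermite–Birkhoff $f$-greedy algorithm (described in the context) to $u$ with index set $\mathcal J:=\{1,\dots,n\}$, producing selected pairs $(x_1,\ell_1),(x_2,\ell_2),\dots$ and errors $e_0,e_1,\dots$. Then, for every $m\ge 1$, \[ \min_{m+1\le i\le 2m}\ \|\nabla e_i\|_{L^\infty(\Omega)} \ \le\ \sqrt{n}\, m^{-1/2}\, \|e_{m+1}\|_{H_k(\Omega)} \left[\ \prod_{i=m+1}^{2m} P_i(x_{i+1},\ell_{i+1})\ \right]^{1/m}. \]
   Context: $k:\Omega\times\Omega\to\mathbb{R}$ is a symmetric positive definite kernel with reproducing kernel Hilbert space $H_k(\Omega)$, $k\in C^2(\Omega\times\Omega)$, and for every $x\in\Omega$ and $\ell\in\mathcal J$ the function $\partial^{(2)}_\ell k(\cdot,x)$ (the $\ell$-th partial derivative of $k$ in its second argument) lies in $H_k(\Omega)$ and satisfies the derivative reproducing property $\partial_\ell f(x)=\langle f,\partial_\ell^{(2)}k(\cdot,x)\rangle_{H_k(\Omega)}$ for all $f\in H_k(\Omega)$. For a finite selection $\{(x_i,\ell_i)\}_{i=1}^m\subset\Omega\times\mathcal J$ let $V_m:=\operatorname{span}\{\partial^{(2)}_{\ell_i}k(\cdot,x_i): i=1,\dots,m\}$ ($V_0=\{0\}$), let $\Pi_m:H_k(\Omega)\to V_m$ be the orthogonal projector, $s_m:=\Pi_m u$ and $e_m:=u-s_m$.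 The $f$-greedy algorithm: starting from $m=0$ (so $s_0=0$), for each $m\ge 0$ choose $(x_{m+1},\ell_{m+1})\in\operatorname{argmax}_{x\in\Omega,\ \ell\in\mathcal J}|\partial_\ell e_m(x)|$ (a maximizer is assumed to exist) and set $s_{m+1}:=\Pi_{m+1}u$. The (derivative) power function is $P_m(x,\ell):=\|(I-\Pi_m)\partial^{(2)}_\ell k(\cdot,x)\|_{H_k(\Omega)}$ for $(x,\ell)\in\Omega\times\mathcal J$. Finally $\|\nabla e\|_{L^\infty(\Omega)}:=\sup_{x\in\Omega}\|\nabla e(x)\|_2$. *)

theory Defs
  imports "HOL-Analysis.Analysis"
begin

definition C2_on :: "'a::real_normed_vector set \<Rightarrow> ('a \<Rightarrow> real) \<Rightarrow> bool" where
  "C2_on S f \<longleftrightarrow> (\<exists>f' :: 'a \<Rightarrow> ('a \<Rightarrow>\<^sub>L real). \<exists>f'' :: 'a \<Rightarrow> ('a \<Rightarrow>\<^sub>L ('a \<Rightarrow>\<^sub>L real)).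
      (\<forall>z\<in>S. (f has_derivative blinfun_apply (f' z)) (at z)) \<and>
      (\<forall>z\<in>S. (f' has_derivative blinfun_apply (f'' z)) (at z)) \<and>
      continuous_on S f'')"

definition spd_kernel :: "'a set \<Rightarrow> ('a \<Rightarrow> 'a \<Rightarrow> real) \<Rightarrow> bool" where
  "spd_kernel \<Omega> k \<longleftrightarrow> (\<forall>x\<in>\<Omega>. \<forall>y\<in>\<Omega>. k x y = k y x) \<and>
     (\<forall>X c. finite X \<longrightarrow> X \<subseteq> \<Omega> \<longrightarrow> (\<exists>x\<in>X. c x \<noteq> (0::real)) \<longrightarrow>
        (\<Sum>x\<in>X. \<Sum>y\<in>X. c x * c y * k x y) > 0)"

definition partial :: "(real^'n \<Rightarrow> real) \<Rightarrow> 'n \<Rightarrow> real^'n \<Rightarrow> real" where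
  "partial g l x = deriv (\<lambda>t. g (x + t *\<^sub>R axis l 1)) 0"

definition grad :: "(real^'n \<Rightarrow> real) \<Rightarrow> real^'n \<Rightarrow> real^'n" where
  "grad g x = (\<chi> l. partial g l x)"

definition grad_sup_norm :: "(real^'n) set \<Rightarrow> (real^'n \<Rightarrow> real) \<Rightarrow> real" where
  "grad_sup_norm \<Omega> g = (SUP x\<in>\<Omega>. norm (grad g x))"

definition orth_proj :: "'h::real_inner set \<Rightarrow> 'h \<Rightarrow> 'h" where
  "orth_proj V f = (THE v. v \<in> V \<and> (\<forall>w\<in>V. inner (f - v) w = 0))"

text \<open>RKHS element viewed as a function, via the kernel feature map K.\<close>
definition fun_of :: "(real^'n \<Rightarrow> 'h::real_inner) \<Rightarrow> 'h \<Rightarrow> real^'n \<Rightarrow> real" where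
  "fun_of K f = (\<lambda>x. inner f (K x))"

definition Vspace :: "(real^'n \<Rightarrow> 'n \<Rightarrow> 'h::real_inner) \<Rightarrow> (nat \<Rightarrow> (real^'n) \<times> 'n) \<Rightarrow> nat \<Rightarrow> 'h set" where
  "Vspace D sel m = span ((\<lambda>i. D (fst (sel i)) (snd (sel i))) ` {1..m})"

definition power_fun :: "(real^'n \<Rightarrow> 'n \<Rightarrow> 'h::real_inner) \<Rightarrow> (nat \<Rightarrow> (real^'n) \<times> 'n) \<Rightarrow> nat \<Rightarrow> real^'n \<Rightarrow> 'n \<Rightarrow> real" where
  "power_fun D sel m x l = norm (D x l - orth_proj (Vspace D sel m) (D x l))"

definition err :: "(real^'n \<Rightarrow> 'n \<Rightarrow> 'h::real_inner) \<Rightarrow> (nat \<Rightarrow> (real^'n) \<times> 'n) \<Rightarrow> 'h \<Rightarrow> nat \<Rightarrow> 'h" where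
  "err D sel u m = u - orth_proj (Vspace D sel m) u"

end

theory Submission
  imports Defs
begin


lemma amgm:
  fixes x :: "'a \<Rightarrow> real"
  assumes fin: "finite S" and ne: "S \<noteq> {}" and pos: "\<And>i. i \<in> S \<Longrightarrow> x i > 0"
  shows "(\<Prod>i\<in>S. x i) powr (1 / real (card S)) \<le> (\<Sum>i\<in>S. x i) / real (card S)"
proof -
  define c where "c = real (card S)"
  have c: "c > 0" using fin ne by (simp add: c_def card_gt_0_iff)
  have pp: "(\<Prod>i\<in>S. x i) > 0" using pos by (simp add: prod_pos)
  have "(\<Prod>i\<in>S. x i) powr (1 / c) = exp ((1/c) * ln (\<Prod>i\<in>S. x i))"
    using pp unfolding powr_def by simp
  also have "\<dots> = exp (\<Sum>i\<in>S. (1/c) *\<^sub>R ln (x i))"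
  proof -
    have nz: "\<And>i. i \<in> S \<Longrightarrow> x i \<noteq> 0" using pos by (metis less_irrefl)
    have "ln (\<Prod>i\<in>S. x i) = (\<Sum>i\<in>S. ln (x i))" using ln_prod[OF fin nz] .
    then show ?thesis by (simp add: sum_distrib_left)
  qed
  also have "\<dots> \<le> (\<Sum>i\<in>S. (1/c) * exp (ln (x i)))"
  proof (rule convex_on_sum[OF fin ne exp_convex])
    show "(\<Sum>i\<in>S. 1 / c) = 1" using c by (simp add: c_def)
  qed (use c in auto)
  also have "\<dots> = (\<Sum>i\<in>S. x i / c)"
    by (rule sum.cong) (use pos in auto)
  also have "\<dots> = (\<Sum>i\<in>S. x i) / c"
    by (rule sum_divide_distrib[symmetric])
  finally show ?thesis unfolding c_def .
qed

definition isproj :: "'h::real_inner set \<Rightarrow> 'h \<Rightarrow> 'h \<Rightarrow> bool" where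
  "isproj V f v \<longleftrightarrow> v \<in> V \<and> (\<forall>w\<in>V. inner (f - v) w = 0)"

lemma isproj_unique:
  assumes "subspace V" "isproj V f v1" "isproj V f v2"
  shows "v1 = v2"
proof -
  have d: "v1 - v2 \<in> V" using assms by (simp add: isproj_def subspace_diff)
  have "inner (v1 - v2) (v1 - v2) = inner (f - v2) (v1 - v2) - inner (f - v1) (v1 - v2)"
    by (simp add: algebra_simps inner_diff_left)
  also have "\<dots> = 0" using assms d by (simp add: isproj_def)
  finally show ?thesis by simp
qed

lemma orth_proj_eq:
  assumes "subspace V" "isproj V f v"
  shows "orth_proj V f = v"
  unfolding orth_proj_def
proof (rule the_equality)
  show "v \<in> V \<and> (\<forall>w\<in>V. inner (f - v) w = 0)" using assms(2) unfolding isproj_def by blast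
next
  fix v' assume "v' \<in> V \<and> (\<forall>w\<in>V. inner (f - v') w = 0)"
  then have "isproj V f v'" unfolding isproj_def by blast
  then show "v' = v" using isproj_unique[OF assms(1) _ assms(2)] by blast
qed

lemma orth_span:
  fixes x :: "'h::real_inner"
  assumes "\<And>s. s \<in> S \<Longrightarrow> inner x s = 0" "w \<in> span S"
  shows "inner x w = 0"
proof -
  have "subspace {w. inner x w = 0}"
    by (auto simp: subspace_def inner_add_right)
  then show ?thesis using span_induct[OF assms(2), of "\<lambda>w. inner x w = 0"] assms(1) by auto
qed

lemma proj_step:
  fixes P :: "'h::real_inner \<Rightarrow> 'h"
  assumes P: "\<And>g. isproj (span S) g (P g)"
  shows "isproj (span (insert a S)) f
           (P f + (inner (f - P f) (a - P a) / (norm (a - P a))\<^sup>2) *\<^sub>R (a - P a))"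
proof -
  define w where "w = a - P a"
  define c where "c = inner (f - P f) w / (norm w)\<^sup>2"
  have PfS: "\<And>g. P g \<in> span S" using P by (simp add: isproj_def)
  have sub: "span S \<subseteq> span (insert a S)" by (simp add: span_mono subset_insertI)
  have wmem: "w \<in> span (insert a S)" unfolding w_def
    using PfS sub by (meson in_mono insertI1 span_base span_diff)
  have mem: "P f + c *\<^sub>R w \<in> span (insert a S)"
    using PfS sub wmem by (meson in_mono span_add span_scale)
  have orthS: "\<And>g v. v \<in> span S \<Longrightarrow> inner (g - P g) v = 0" using P by (simp add: isproj_def)
  have wS: "\<And>v. v \<in> span S \<Longrightarrow> inner w v = 0" unfolding w_def using orthS by blast
  have ww: "inner (f - P f) w - c * inner w w = 0"
  proof (cases "w = 0")
    case True then show ?thesis by simp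
  next
    case False
    then have "inner w w = (norm w)\<^sup>2" by (simp add: power2_norm_eq_inner)
    then show ?thesis using False by (simp add: c_def)
  qed
  have gen: "inner (f - (P f + c *\<^sub>R w)) s = 0" if "s \<in> insert a S" for s
  proof (cases "s = a")
    case True
    have a: "a = P a + w" by (simp add: w_def)
    have "inner (f - (P f + c *\<^sub>R w)) a
        = inner (f - P f) (P a) - c * inner w (P a) + (inner (f - P f) w - c * inner w w)"
      by (subst a) (simp add: inner_diff_left inner_add_right inner_add_left algebra_simps)
    also have "\<dots> = 0" using orthS[OF PfS] wS[OF PfS] ww by simp
    finally show ?thesis using True by simp
  next
    case False
    then have sS: "s \<in> span S" using that span_base by auto
    have "inner (f - (P f + c *\<^sub>R w)) s = inner (f - P f) s - c * inner w s"
      by (simp add: inner_diff_left inner_add_left algebra_simps)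
    then show ?thesis using orthS[OF sS] wS[OF sS] by simp
  qed
  have "\<forall>v\<in>span (insert a S). inner (f - (P f + c *\<^sub>R w)) v = 0"
    using orth_span[OF gen] by blast
  then show ?thesis using mem by (simp add: isproj_def c_def w_def)
qed

lemma proj_exists:
  fixes S :: "'h::real_inner set"
  assumes "finite S"
  shows "\<exists>P. \<forall>g. isproj (span S) g (P g)"
  using assms
proof (induction S rule: finite_induct)
  case empty
  show ?case by (rule exI[of _ "\<lambda>_. 0"]) (simp add: isproj_def)
next
  case (insert a S)
  then obtain P where P: "\<And>g. isproj (span S) g (P g)" by blast
  show ?case
    by (rule exI[of _ "\<lambda>f. P f + (inner (f - P f) (a - P a) / (norm (a - P a))\<^sup>2) *\<^sub>R (a - P a)"])
       (use proj_step[OF P, of a] in blast)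
qed

lemma isproj_orth:
  fixes S :: "'h::real_inner set"
  assumes "finite S"
  shows "isproj (span S) g (orth_proj (span S) g)"
proof -
  obtain P where P: "\<And>g. isproj (span S) g (P g)" using proj_exists[OF assms] by blast
  show ?thesis using orth_proj_eq[OF subspace_span P] P by simp
qed

lemma orth_proj_step:
  fixes S :: "'h::real_inner set"
  assumes "finite S"
  defines "P \<equiv> orth_proj (span S)"
  shows "orth_proj (span (insert a S)) f
           = P f + (inner (f - P f) (a - P a) / (norm (a - P a))\<^sup>2) *\<^sub>R (a - P a)"
proof -
  have "\<And>g. isproj (span S) g (P g)" using isproj_orth[OF assms(1)] P_def by simp
  from orth_proj_eq[OF subspace_span proj_step[OF this]] show ?thesis .
qed

lemma norm_cart_bound:
  fixes v :: "real^'n"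
  assumes "\<And>l. \<bar>v $ l\<bar> \<le> R"
  shows "norm v \<le> sqrt (real CARD('n)) * R"
proof -
  have R: "R \<ge> 0" using assms[of undefined] by linarith
  have "norm v = L2_set (\<lambda>i. norm (v $ i)) UNIV" by (simp add: norm_vec_def)
  also have "\<dots> \<le> L2_set (\<lambda>i. R) (UNIV :: 'n set)" by (rule L2_set_mono) (use assms in \<open>auto simp: real_norm_def\<close>)
  also have "\<dots> = sqrt (real CARD('n) * R\<^sup>2)" by (simp add: L2_set_def)
  also have "\<dots> = sqrt (real CARD('n)) * R" using R by (simp add: real_sqrt_mult)
  finally show ?thesis .
qed




lemma aux_A: fixes Pr G0 :: real and m :: nat assumes Pr0: "Pr > 0" and G0_def: "G0 = Pr powr (1 / real m)"
  shows "(1 / Pr\<^sup>2) powr (1 / real m) = 1 / G0\<^sup>2"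
proof -
  have G00: "G0 > 0" using Pr0 G0_def by simp
  have "G0\<^sup>2 = G0 powr 2" using G00 by (simp add: powr_numeral)
  also have "\<dots> = Pr powr (1 / real m * 2)" by (simp add: G0_def powr_powr)
  also have "\<dots> = (Pr powr 2) powr (1 / real m)" by (simp add: powr_powr mult.commute)
  also have "\<dots> = (Pr\<^sup>2) powr (1 / real m)" using Pr0 by (simp add: powr_numeral)
  finally have "(Pr\<^sup>2) powr (1 / real m) = G0\<^sup>2" ..
  then show ?thesis using Pr0 by (simp add: powr_divide)
qed
lemma aux_B: fixes m :: nat assumes m0: "real m > 0" shows "(real m powr (-1/2))\<^sup>2 = 1 / real m"
proof -
  have "(real m powr (-1/2))\<^sup>2 = (real m powr (-1/2)) powr 2" using m0 by (simp add: powr_numeral)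
  also have "\<dots> = real m powr (-1)" by (simp add: powr_powr)
  also have "\<dots> = 1 / real m" using m0 by (simp add: powr_minus_divide)
  finally show ?thesis .
qed
lemma aux_C: fixes f :: "nat \<Rightarrow> real" shows "(\<Prod>i\<in>I. 1 / (f i)\<^sup>2) = 1 / (\<Prod>i\<in>I. f i)\<^sup>2"
  by (simp add: prod_dividef prod_power_distrib)


lemma sq_step: fixes x w :: "'h::real_inner"
  assumes "w \<noteq> 0"
  shows "(norm (x - (inner x w / (norm w)\<^sup>2) *\<^sub>R w))\<^sup>2 = (norm x)\<^sup>2 - (inner x w)\<^sup>2 / (norm w)\<^sup>2"
proof -
  define a where "a = inner x w"
  define n where "n = (norm w)\<^sup>2"
  have n0: "n > 0" using assms by (simp add: n_def)
  have ww: "inner w w = n" by (simp add: n_def power2_norm_eq_inner)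
  have "(norm (x - (a / n) *\<^sub>R w))\<^sup>2 = inner (x - (a / n) *\<^sub>R w) (x - (a / n) *\<^sub>R w)"
    by (rule power2_norm_eq_inner)
  also have "\<dots> = inner x x - 2 * (a / n) * inner x w + (a / n) * (a / n) * inner w w"
    by (simp add: inner_diff_left inner_diff_right inner_commute[of w x] algebra_simps)
  also have "\<dots> = inner x x - a\<^sup>2 / n"
    using n0 by (simp add: ww a_def[symmetric] field_simps power2_eq_square)
  also have "\<dots> = (norm x)\<^sup>2 - a\<^sup>2 / n" by (simp add: power2_norm_eq_inner)
  finally show ?thesis by (simp add: a_def n_def)
qed

theorem theorem1:
  fixes \<Omega> :: "(real^'n) set"
    and k :: "real^'n \<Rightarrow> real^'n \<Rightarrow> real"
    and K :: "real^'n \<Rightarrow> 'h::{real_inner, complete_space}"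
    and D :: "real^'n \<Rightarrow> 'n \<Rightarrow> 'h"
    and u :: 'h
    and sel :: "nat \<Rightarrow> (real^'n) \<times> 'n"
    and m :: nat
  assumes "open \<Omega>"
    and spd: "spd_kernel \<Omega> k"
    and C2: "C2_on (\<Omega> \<times> \<Omega>) (\<lambda>(x, y). k x y)"
    and rk: "\<forall>x\<in>\<Omega>. \<forall>y\<in>\<Omega>. k x y = inner (K x) (K y)"
    and dense: "closure (span (K ` \<Omega>)) = UNIV"
    and dreprod: "\<forall>f. \<forall>x\<in>\<Omega>. \<forall>l.
        ((\<lambda>t. fun_of K f (x + t *\<^sub>R axis l 1)) has_real_derivative inner f (D x l)) (at 0)"
    and greedy_in: "\<forall>j. fst (sel (Suc j)) \<in> \<Omega>"
    and greedy_max: "\<forall>j. \<forall>x\<in>\<Omega>. \<forall>l.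
        \<bar>partial (fun_of K (err D sel u j)) l x\<bar>
          \<le> \<bar>partial (fun_of K (err D sel u j)) (snd (sel (Suc j))) (fst (sel (Suc j)))\<bar>"
    and "m \<ge> 1"
  shows "(MIN i\<in>{m+1..2*m}. grad_sup_norm \<Omega> (fun_of K (err D sel u i)))
     \<le> sqrt (real CARD('n)) * real m powr (-1/2) * norm (err D sel u (m+1))
        * (\<Prod>i=m+1..2*m. power_fun D sel i (fst (sel (i+1))) (snd (sel (i+1)))) powr (1 / real m)"
  proof -
  define N where "N = sqrt (real CARD('n))"
  define Dp where "Dp i = D (fst (sel i)) (snd (sel i))" for i
  define Pj where "Pj j = orth_proj (Vspace D sel j)" for j
  define e where "e j = err D sel u j" for j
  define w where "w j = Dp (Suc j) - Pj j (Dp (Suc j))" for j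
  define q where "q j = (inner (e j) (w j))\<^sup>2 / (norm (w j))\<^sup>2" for j
  define G where "G j = grad_sup_norm \<Omega> (fun_of K (e j))" for j
  have V: "Vspace D sel j = span (Dp ` {1..j})" for j by (simp add: Vspace_def Dp_def)
  have fin: "finite (Dp ` {1..j})" for j by simp
  have VS: "Vspace D sel (Suc j) = span (insert (Dp (Suc j)) (Dp ` {1..j}))" for j
  proof -
    have "{1..Suc j} = insert (Suc j) {1..j}" by auto
    then show ?thesis by (simp add: V)
  qed
  have isp: "isproj (Vspace D sel j) g (Pj j g)" for j g
    using isproj_orth[OF fin] by (simp add: V Pj_def)
  have eorth: "inner (e j) v = 0" if "v \<in> Vspace D sel j" for j v
    using isp[of j u] that by (simp add: isproj_def e_def err_def Pj_def)
  have edef: "e j = u - Pj j u" for j by (simp add: e_def err_def Pj_def)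
  have step: "Pj (Suc j) g = Pj j g + (inner (g - Pj j g) (w j) / (norm (w j))\<^sup>2) *\<^sub>R w j" for j g
    unfolding Pj_def w_def VS using orth_proj_step[OF fin] by (simp add: V)
  have estep: "e (Suc j) = e j - (inner (e j) (w j) / (norm (w j))\<^sup>2) *\<^sub>R w j" for j
    using step[of j u] by (simp add: edef algebra_simps)
  have inner_ew: "inner (e j) (w j) = inner (e j) (Dp (Suc j))" for j
  proof -
    have "Pj j (Dp (Suc j)) \<in> Vspace D sel j" using isp by (simp add: isproj_def)
    then show ?thesis using eorth by (simp add: w_def inner_diff_right)
  qed
  have normstep: "(norm (e (Suc j)))\<^sup>2 = (norm (e j))\<^sup>2 - q j" for j
  proof (cases "w j = 0")
    case True then show ?thesis by (simp add: estep q_def)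
  next
    case False
    then show ?thesis using sq_step[OF False, of "e j"] by (simp add: estep q_def)
  qed
  have tele: "(\<Sum>i\<in>{j..<j+k}. q i) = (norm (e j))\<^sup>2 - (norm (e (j+k)))\<^sup>2" for j k
  proof (induction k)
    case 0 then show ?case by simp
  next
    case (Suc k)
    have "{j..<j + Suc k} = insert (j+k) {j..<j+k}" by auto
    then show ?case using Suc normstep[of "j+k"] by simp
  qed
  have part: "partial (fun_of K f) l x = inner f (D x l)" if "x \<in> \<Omega>" for f l x
    unfolding partial_def using dreprod that by (blast intro: DERIV_imp_deriv)
  have Gb: "G j \<le> N * \<bar>inner (e j) (w j)\<bar>" for j
  proof -
    have ne: "\<Omega> \<noteq> {}" using greedy_in by blast
    show ?thesis unfolding G_def grad_sup_norm_def N_def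
    proof (rule cSUP_least[OF ne])
      fix x assume x: "x \<in> \<Omega>"
      show "norm (grad (fun_of K (e j)) x) \<le> sqrt (real CARD('n)) * \<bar>inner (e j) (w j)\<bar>"
      proof (rule norm_cart_bound)
        fix l
        have "\<bar>grad (fun_of K (e j)) x $ l\<bar> = \<bar>partial (fun_of K (e j)) l x\<bar>"
          by (simp add: grad_def)
        also have "\<dots> \<le> \<bar>partial (fun_of K (e j)) (snd (sel (Suc j))) (fst (sel (Suc j)))\<bar>"
          using greedy_max x by (simp add: e_def)
        also have "\<dots> = \<bar>inner (e j) (w j)\<bar>"
          using part greedy_in by (simp add: inner_ew Dp_def)
        finally show "\<bar>grad (fun_of K (e j)) x $ l\<bar> \<le> \<bar>inner (e j) (w j)\<bar>" .
      qed
    qed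
  qed
  have cs: "\<bar>inner (e j) (w j)\<bar> \<le> norm (e j) * norm (w j)" for j
    by (rule Cauchy_Schwarz_ineq2)
  have pf: "power_fun D sel i (fst (sel (Suc i))) (snd (sel (Suc i))) = norm (w i)" for i
    by (simp add: power_fun_def w_def Dp_def Pj_def)
  define I where "I = {m+1..2*m}"
  have finI: "finite I" and neI: "I \<noteq> {}" and cardI: "card I = m"
    using \<open>m \<ge> 1\<close> by (auto simp: I_def)
  define E where "E = norm (e (m+1))"
  have sumq: "(\<Sum>i\<in>I. q i) \<le> E\<^sup>2"
  proof -
    have "I = {m+1..<(m+1)+m}" by (auto simp: I_def)
    then show ?thesis using tele[of "m+1" m] by (simp add: E_def)
  qed
  have N0: "N > 0" by (simp add: N_def)
  define Mu where "Mu = (MIN i\<in>I. G i)"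
  have MuG: "Mu \<le> G i" if "i \<in> I" for i
    unfolding Mu_def using finI that by simp
  define Pr where "Pr = (\<Prod>i\<in>I. norm (w i))"
  define RHS where "RHS = N * real m powr (-1/2) * E * Pr powr (1 / real m)"
  have RHS0: "RHS \<ge> 0" by (simp add: RHS_def E_def N_def Pr_def prod_nonneg)
  have main: "Mu \<le> RHS"
  proof (cases "\<exists>i\<in>I. w i = 0")
    case True
    then obtain i where i: "i \<in> I" "w i = 0" by blast
    have "Mu \<le> G i" using MuG i by simp
    also have "\<dots> \<le> 0" using Gb[of i] i by simp
    finally show ?thesis using RHS0 by simp
  next
    case False
    then have wpos: "norm (w i) > 0" if "i \<in> I" for i using that by auto
    show ?thesis
    proof (cases "Mu \<le> 0")
      case True then show ?thesis using RHS0 by simp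
    next
      case False
      then have Mu0: "Mu > 0" by simp
      define S where "S = (\<Sum>i\<in>I. 1 / (norm (w i))\<^sup>2)"
      have qb: "(Mu / N)\<^sup>2 * (1 / (norm (w i))\<^sup>2) \<le> q i" if "i \<in> I" for i
      proof -
        have "Mu / N \<le> \<bar>inner (e i) (w i)\<bar>"
          using MuG[OF that] Gb[of i] N0 by (simp add: divide_le_eq mult.commute)
        then have "(Mu / N)\<^sup>2 \<le> (inner (e i) (w i))\<^sup>2"
          using Mu0 N0 by (metis abs_le_square_iff abs_of_pos divide_pos_pos less_imp_le)
        then show ?thesis unfolding q_def
          using wpos[OF that] by (simp add: divide_right_mono)
      qed
      have MS: "(Mu / N)\<^sup>2 * S \<le> E\<^sup>2"
      proof -
        have "(Mu / N)\<^sup>2 * S = (\<Sum>i\<in>I. (Mu / N)\<^sup>2 * (1 / (norm (w i))\<^sup>2))"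
          by (simp add: S_def sum_distrib_left)
        also have "\<dots> \<le> (\<Sum>i\<in>I. q i)" by (rule sum_mono) (use qb in auto)
        finally show ?thesis using sumq by simp
      qed
      have Pr0: "Pr > 0" unfolding Pr_def using wpos by (simp add: prod_pos)
      define G0 where "G0 = Pr powr (1 / real m)"
      have G00: "G0 > 0" using Pr0 by (simp add: G0_def)
      have am: "(\<Prod>i\<in>I. 1 / (norm (w i))\<^sup>2) powr (1 / real m) \<le> S / real m"
        using amgm[OF finI neI, of "\<lambda>i. 1 / (norm (w i))\<^sup>2"] wpos cardI by (simp add: S_def)
      have pe: "(\<Prod>i\<in>I. 1 / (norm (w i))\<^sup>2) powr (1 / real m) = 1 / G0\<^sup>2"
        unfolding aux_C Pr_def[symmetric] using aux_A[OF Pr0 G0_def] .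
      have m0: "real m > 0" using \<open>m \<ge> 1\<close> by simp
      have "real m / G0\<^sup>2 \<le> S" using am pe m0 by (simp add: field_simps)
      then have "(Mu / N)\<^sup>2 * (real m / G0\<^sup>2) \<le> E\<^sup>2"
        using MS by (meson mult_left_mono order_trans zero_le_power2)
      then have Mu2: "Mu\<^sup>2 \<le> N\<^sup>2 * E\<^sup>2 * G0\<^sup>2 / real m"
        using N0 G00 m0 by (simp add: field_simps power_divide)
      have "RHS\<^sup>2 = N\<^sup>2 * E\<^sup>2 * G0\<^sup>2 / real m"
        using aux_B[OF m0] by (simp add: RHS_def G0_def power_mult_distrib)
      then have "Mu\<^sup>2 \<le> RHS\<^sup>2" using Mu2 by simp
      then show ?thesis using RHS0 by (rule power2_le_imp_le)
    qed
  qed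
  show ?thesis using main
    by (simp add: Mu_def RHS_def I_def G_def e_def pf N_def E_def Pr_def)
qed

end
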